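(* Let $p\geq3$ be a prime, $\omega=e^{2\pi i/p}$, and let $M=(m_{ij})_{i,j=0}^{p-1}$ be a circulant matrix with entries in $\mathbb Z/p\mathbb Z$. Then $U=(\omega^{m_{ij}})_{i,j=0}^{p-1}$ is a complex Hadamard matrix if and only if there exist $a,b,c\in\mathbb Z/p\mathbb Z$ with $a\neq0$ such that $m_{0j}=aj^2+bj+c$ for all $j\in\mathbb Z/p\mathbb Z$.
   Context: A complex Hadamard matrix has all entries of modulus one and pairwise orthogonal rows. $M$ circulant means $m_{ij}$ depends only on $j-i$ modulo $p$. *)

theory Defs
  imports Complex_Main "HOL-Number_Theory.Cong"
begin

text \<open>Matrices indexed by 0..p-1 are represented as functions nat => nat => _,
  only the entries with indices < p being relevant. Entries of M lie in Z/pZ,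
  represented by integers taken modulo p.\<close>

definition circulant_mod :: "nat \<Rightarrow> (nat \<Rightarrow> nat \<Rightarrow> int) \<Rightarrow> bool" where
  "circulant_mod p M \<longleftrightarrow>
     (\<forall>i<p. \<forall>j<p. \<forall>k<p. \<forall>l<p.
        (int j - int i) mod int p = (int l - int k) mod int p \<longrightarrow> [M i j = M k l] (mod int p))"

definition complex_hadamard :: "nat \<Rightarrow> (nat \<Rightarrow> nat \<Rightarrow> complex) \<Rightarrow> bool" where
  "complex_hadamard n U \<longleftrightarrow>
     (\<forall>i<n. \<forall>j<n. norm (U i j) = 1) \<and>
     (\<forall>i<n. \<forall>k<n. i \<noteq> k \<longrightarrow> (\<Sum>j<n. U i j * cnj (U k j)) = 0)"

text \<open>omega^m with omega = exp(2 pi i / p); well defined for m in Z/pZ.\<close>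
definition root_pow :: "nat \<Rightarrow> int \<Rightarrow> complex" where
  "root_pow p m = cis (2 * pi * real_of_int m / real p)"

end

theory Submission
  imports Defs "HOL-Computational_Algebra.Polynomial" "HOL-Computational_Algebra.Primes"
begin



definition cyc :: "nat \<Rightarrow> int poly" where "cyc p = (\<Sum>i<p. monom 1 i)"

lemma coeff_cyc: "coeff (cyc p) n = (if n < p then 1 else 0)"
  by (simp add: cyc_def coeff_sum)

lemma degree_cyc: "p > 0 \<Longrightarrow> degree (cyc p) = p - 1"
proof -
  assume p: "p > 0"
  have "degree (cyc p) \<le> p - 1"
    by (rule degree_le) (auto simp: coeff_cyc)
  moreover have "coeff (cyc p) (p - 1) \<noteq> 0" using p by (simp add: coeff_cyc)
  hence "p - 1 \<le> degree (cyc p)" by (rule le_degree)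
  ultimately show ?thesis by simp
qed

lemma pcompose_power': "pcompose (r ^ i) q = (pcompose r q) ^ i"
  by (induction i) (simp_all add: pcompose_mult pcompose_1)

lemma cyc_shift: "pcompose (cyc p) [:1,1:] = (\<Sum>i<p. [:1,1:] ^ i)"
  by (simp add: cyc_def pcompose_sum monom_altdef pcompose_smult pcompose_power' pcompose_pCons)

lemma coeff_cyc_shift:
  assumes "p > 0"
  shows "coeff (pcompose (cyc p) [:1,1:]) n = int (p choose (Suc n))"
proof -
  have "coeff (pcompose (cyc p) [:1,1:]) n = (\<Sum>i<p. coeff ([:1,1::int:] ^ i) n)"
    by (simp add: cyc_shift coeff_sum)
  also have "\<dots> = (\<Sum>i<p. int (i choose n))"
  proof (rule sum.cong)
    fix i assume "i \<in> {..<p}"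
    show "coeff ([:1,1::int:] ^ i) n = int (i choose n)"
    proof (cases "n \<le> i")
      case True then show ?thesis by (simp add: coeff_linear_poly_power)
    next
      case False
      have "degree ([:1,1::int:] ^ i) \<le> i"
        using degree_power_le[of "[:1,1::int:]" i] by simp
      then show ?thesis using False by (simp add: coeff_eq_0)
    qed
  qed simp
  also have "\<dots> = int (\<Sum>i\<le>p-1. i choose n)"
    using assms by (simp add: lessThan_Suc_atMost[symmetric])
  also have "\<dots> = int (p choose Suc n)"
    using assms by (simp add: sum_choose_upper)
  finally show ?thesis .
qed

lemma eis_aux:
  fixes a b :: "int poly"
  assumes pr: "prime p" and ab: "a * b = pcompose (cyc p) [:1,1:]"
    and a0: "int p dvd coeff a 0" and b0: "\<not> int p dvd coeff b 0"
    and la: "\<not> int p dvd lead_coeff a"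
  shows "p - 1 \<le> degree a"
proof -
  have ex: "\<exists>i. \<not> int p dvd coeff a i" using la by blast
  define i where "i = (LEAST i. \<not> int p dvd coeff a i)"
  have ni: "\<not> int p dvd coeff a i" unfolding i_def by (rule LeastI_ex[OF ex])
  have lt: "t < i \<Longrightarrow> int p dvd coeff a t" for t unfolding i_def using not_less_Least by blast
  have "coeff (a*b) i = (\<Sum>t\<le>i. coeff a t * coeff b (i - t))" by (rule coeff_mult)
  also have "\<dots> = (\<Sum>t<i. coeff a t * coeff b (i - t)) + coeff a i * coeff b 0"
    by (simp add: lessThan_Suc_atMost[symmetric])
  finally have eq: "coeff (a*b) i = (\<Sum>t<i. coeff a t * coeff b (i - t)) + coeff a i * coeff b 0" .
  have d1: "int p dvd (\<Sum>t<i. coeff a t * coeff b (i - t))" by (intro dvd_sum) (simp add: lt)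
  have pi: "prime (int p)" using pr by simp
  have d2: "\<not> int p dvd coeff a i * coeff b 0" using ni b0 pi by (simp add: prime_dvd_mult_iff)
  have nd: "\<not> int p dvd coeff (a*b) i" using eq d1 d2 by (metis dvd_add_right_iff)
  have p0: "p > 0" using pr prime_gt_0_nat by blast
  have "\<not> Suc i < p"
  proof
    assume "Suc i < p"
    hence "p dvd (p choose Suc i)" using pr by (intro dvd_choose_prime) auto
    hence "int p dvd int (p choose Suc i)" by simp
    thus False using nd ab coeff_cyc_shift[OF p0, of i] by simp
  qed
  hence "p - 1 \<le> i" by simp
  moreover have "i \<le> degree a"
  proof (rule ccontr)
    assume "\<not> i \<le> degree a" then have "coeff a i = 0" by (simp add: coeff_eq_0)
    thus False using ni by simp
  qed
  ultimately show ?thesis by simp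
qed

lemma cyc_irred:
  assumes pr: "prime p" and AB: "A * B = cyc p"
  shows "degree A = 0 \<or> degree B = 0"
proof -
  define a where "a = pcompose A [:1,1:]"
  define b where "b = pcompose B [:1,1:]"
  have p0: "p > 0" using pr prime_gt_0_nat by blast
  have p1: "p > 1" using pr prime_gt_1_nat by blast
  have ab: "a * b = pcompose (cyc p) [:1,1:]" by (simp add: a_def b_def pcompose_mult AB[symmetric])
  have da: "degree a = degree A" by (simp add: a_def degree_pcompose)
  have db: "degree b = degree B" by (simp add: b_def degree_pcompose)
  have c0: "coeff a 0 * coeff b 0 = int p"
    using ab coeff_cyc_shift[OF p0, of 0] by (metis coeff_mult_0 choose_one One_nat_def)
  have dc: "degree (pcompose (cyc p) [:1,1:]) = p - 1" using p0 by (simp add: degree_pcompose degree_cyc)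
  have "lead_coeff a * lead_coeff b = lead_coeff (pcompose (cyc p) [:1,1:])"
    by (simp add: ab[symmetric] lead_coeff_mult)
  also have "\<dots> = 1" using dc coeff_cyc_shift[OF p0, of "p - 1"] p0 by simp
  finally have lab: "lead_coeff a * lead_coeff b = 1" .
  have np1: "\<not> int p dvd 1" using p1 by simp
  have la: "\<not> int p dvd lead_coeff a" using lab np1 by (metis dvd_mult2)
  have lb: "\<not> int p dvd lead_coeff b" using lab np1 by (metis dvd_mult)
  have pi: "prime (int p)" using pr by simp
  have either: "int p dvd coeff a 0 \<or> int p dvd coeff b 0"
    using c0 pi by (metis dvd_refl prime_dvd_mult_iff)
  have notboth: "\<not> (int p dvd coeff a 0 \<and> int p dvd coeff b 0)"
  proof
    assume "int p dvd coeff a 0 \<and> int p dvd coeff b 0"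
    hence "int p * int p dvd int p" using c0 by (metis mult_dvd_mono)
    hence "int p * int p \<le> int p" using p0 by (intro zdvd_imp_le) auto
    thus False using p1 by (simp add: mult_le_cancel_right1 )
  qed
  have an: "a \<noteq> 0" using lab by auto
  have bn: "b \<noteq> 0" using lab by auto
  have deg: "degree a + degree b = p - 1" using an bn dc ab by (metis degree_mult_eq)
  show ?thesis
  proof (cases "int p dvd coeff a 0")
    case True
    hence "p - 1 \<le> degree a" using notboth by (intro eis_aux[OF pr ab _ _ la]) auto
    thus ?thesis using deg db by simp
  next
    case False
    hence "p - 1 \<le> degree b" using either ab
      by (intro eis_aux[OF pr _ _ False lb]) (auto simp: mult.commute)
    thus ?thesis using deg da by simp
  qed
qed




definition omega :: "nat \<Rightarrow> complex" where "omega p = cis (2 * pi / real p)"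
definition ev :: "nat \<Rightarrow> int poly \<Rightarrow> complex" where "ev p P = poly (map_poly of_int P) (omega p)"

lemma map_poly_of_int_mult:
  "map_poly (of_int :: int \<Rightarrow> 'a::comm_ring_1) (P * Q) = map_poly of_int P * map_poly of_int Q"
  by (rule poly_eqI) (simp add: coeff_map_poly coeff_mult)

lemma map_poly_of_int_add:
  "map_poly (of_int :: int \<Rightarrow> 'a::comm_ring_1) (P + Q) = map_poly of_int P + map_poly of_int Q"
  by (rule poly_eqI) (simp add: coeff_map_poly)

lemma map_poly_of_int_diff:
  "map_poly (of_int :: int \<Rightarrow> 'a::comm_ring_1) (P - Q) = map_poly of_int P - map_poly of_int Q"
  by (rule poly_eqI) (simp add: coeff_map_poly)

lemma map_poly_of_int_smult:
  "map_poly (of_int :: int \<Rightarrow> 'a::comm_ring_1) (smult c Q) = smult (of_int c) (map_poly of_int Q)"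
  by (rule poly_eqI) (simp add: coeff_map_poly)

lemma ev_mult: "ev p (P * Q) = ev p P * ev p Q"
  by (simp add: ev_def map_poly_of_int_mult)
lemma ev_add: "ev p (P + Q) = ev p P + ev p Q"
  by (simp add: ev_def map_poly_of_int_add)
lemma ev_diff: "ev p (P - Q) = ev p P - ev p Q"
  by (simp add: ev_def map_poly_of_int_diff)
lemma ev_smult: "ev p (smult c Q) = of_int c * ev p Q"
  by (simp add: ev_def map_poly_of_int_smult)
lemma ev_monom: "ev p (monom c n) = of_int c * omega p ^ n"
  by (simp add: ev_def map_poly_monom poly_monom)
lemma ev_sum: "ev p (\<Sum>i\<in>A. f i) = (\<Sum>i\<in>A. ev p (f i))"
  by (induction A rule: infinite_finite_induct) (simp_all add: ev_def map_poly_of_int_add)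
lemma ev_const: "ev p [:c:] = of_int c"
  by (simp add: ev_def map_poly_pCons)

lemma omega_pow: "omega p ^ k = cis (2 * pi * real k / real p)"
  by (simp add: omega_def DeMoivre mult_ac)

lemma omega_p: "p > 0 \<Longrightarrow> omega p ^ p = 1"
  by (simp add: omega_pow)

lemma omega_neq1:
  assumes "p > 0" "0 < k" "k < p"
  shows "omega p ^ k \<noteq> 1"
proof
  assume h: "omega p ^ k = 1"
  have inj: "inj_on (\<lambda>k. cis (2 * pi * real k / real p)) {..<p}"
    using bij_betw_roots_unity[OF assms(1)] by (simp add: bij_betw_def)
  have e: "cis (2 * pi * real k / real p) = cis (2 * pi * real 0 / real p)"
    using h by (simp add: omega_pow)
  have "k = 0" using inj_onD[OF inj e] assms by simp
  thus False using assms by simp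
qed

lemma sum_omega: assumes "p > 1" shows "(\<Sum>i<p. omega p ^ i) = 0"
proof -
  have "omega p \<noteq> 1" using omega_neq1[of p 1] assms by simp
  hence "(\<Sum>i<p. omega p ^ i) = (omega p ^ p - 1) / (omega p - 1)"
    by (simp add: geometric_sum)
  thus ?thesis using omega_p[of p] assms by simp
qed

lemma ev_cyc: "p > 1 \<Longrightarrow> ev p (cyc p) = 0"
  by (simp add: cyc_def ev_sum ev_monom sum_omega)

lemma content_cyc: "p > 0 \<Longrightarrow> content (cyc p) = 1"
proof -
  assume p: "p > 0"
  have "content (cyc p) dvd 1" using content_dvd_coeff[of "cyc p" 0] p by (simp add: coeff_cyc)
  hence "normalize (content (cyc p)) = 1" by (simp add: is_unit_normalize)
  thus ?thesis by (metis normalize_content)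
qed

lemma no_small_root:
  assumes pr: "prime p" and P0: "P \<noteq> 0" and dP: "degree P < p - 1" and ev0: "ev p P = 0"
  shows False
proof -
  have p1: "p > 1" using pr prime_gt_1_nat by blast
  define S where "S = {n. \<exists>Q. Q \<noteq> 0 \<and> ev p Q = 0 \<and> degree Q = n}"
  have PS: "degree P \<in> S" using P0 ev0 S_def by auto
  define n where "n = (LEAST n. n \<in> S)"
  have "n \<in> S" unfolding n_def using PS by (rule LeastI)
  then obtain Q where Q: "Q \<noteq> 0" "ev p Q = 0" "degree Q = n" unfolding S_def by blast
  have nle: "n \<le> degree P" unfolding n_def using PS by (rule Least_le)
  have minimal: "\<And>R. R \<noteq> 0 \<Longrightarrow> ev p R = 0 \<Longrightarrow> n \<le> degree R"
    unfolding n_def S_def by (rule Least_le) blast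
  have Q1: "degree Q \<ge> 1"
  proof (rule ccontr)
    assume "\<not> degree Q \<ge> 1"
    hence "degree Q = 0" by simp
    hence "Q = [:coeff Q 0:]" by (metis degree_0_id)
    hence "ev p Q = of_int (coeff Q 0)" by (metis ev_const)
    moreover have "coeff Q 0 \<noteq> 0" using Q(1) \<open>Q = [:coeff Q 0:]\<close> by (metis pCons_0_0)
    ultimately show False using Q(2) by simp
  qed
  obtain q r where pd: "pseudo_divmod (cyc p) Q = (q, r)" by (cases "pseudo_divmod (cyc p) Q") auto
  define L where "L = coeff Q (degree Q) ^ (Suc (degree (cyc p)) - degree Q)"
  have eq: "smult L (cyc p) = Q * q + r" using pseudo_divmod(1)[OF Q(1) pd] by (simp add: L_def)
  have rd: "r = 0 \<or> degree r < degree Q" using pseudo_divmod(2)[OF Q(1) pd] .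
  have L0: "L \<noteq> 0" using Q(1) by (simp add: L_def)
  have "ev p (smult L (cyc p)) = 0" using p1 by (simp add: ev_smult ev_cyc)
  hence "ev p r = 0" using eq Q(2) by (simp add: ev_add ev_mult)
  hence r0: "r = 0" using rd minimal Q(3) by fastforce
  hence eq2: "smult L (cyc p) = Q * q" using eq by simp
  have "content (smult L (cyc p)) = \<bar>L\<bar>" using p1 by (simp add: content_cyc)
  hence cc: "content Q * content q = \<bar>L\<bar>" using eq2 by (simp add: content_mult)
  define Q' where "Q' = primitive_part Q"
  define q' where "q' = primitive_part q"
  have "Q * q = smult (content Q * content q) (Q' * q')"
    unfolding Q'_def q'_def
    by (metis content_times_primitive_part mult_smult_left mult_smult_right smult_smult)
  hence eq3: "smult L (cyc p) = smult \<bar>L\<bar> (Q' * q')" using eq2 cc by simp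
  have eq4: "cyc p = smult (sgn L) Q' * q'"
  proof (rule poly_eqI)
    fix i
    have "L * coeff (cyc p) i = \<bar>L\<bar> * coeff (Q' * q') i"
      using arg_cong[OF eq3, of "\<lambda>X. coeff X i"] by simp
    hence "L * coeff (cyc p) i = L * (sgn L * coeff (Q' * q') i)"
      by (simp add: abs_sgn mult.assoc[symmetric] mult.commute[of "sgn L"] )
    hence "coeff (cyc p) i = sgn L * coeff (Q' * q') i" using L0 by simp
    thus "coeff (cyc p) i = coeff (smult (sgn L) Q' * q') i" by simp
  qed
  have dcyc: "degree (cyc p) = p - 1" using p1 by (simp add: degree_cyc)
  have cn: "cyc p \<noteq> 0" using content_cyc[of p] p1 by auto
  have "degree (smult (sgn L) Q') = 0 \<or> degree q' = 0"
    using cyc_irred[OF pr eq4[symmetric]] .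
  moreover have "degree (smult (sgn L) Q') = degree Q" using L0 by (simp add: Q'_def sgn_0_0)
  ultimately have dq: "degree q' = 0" using Q1 by simp
  have n1: "smult (sgn L) Q' \<noteq> 0" using cn eq4 by auto
  have n2: "q' \<noteq> 0" using cn eq4 by auto
  have "degree (cyc p) = degree (smult (sgn L) Q') + degree q'"
    using eq4 degree_mult_eq[OF n1 n2] by simp
  hence "degree (cyc p) = degree Q" using dq L0 by (simp add: Q'_def sgn_0_0)
  thus False using dcyc Q(3) nle dP by simp
qed

lemma vanishing:
  assumes pr: "prime p" and h: "(\<Sum>r<p. of_int (c r) * omega p ^ r) = 0"
  shows "\<forall>r<p. c r = c (p - 1)"
proof -
  have p1: "p > 1" using pr prime_gt_1_nat by blast
  define P where "P = (\<Sum>r<p. monom (c r - c (p - 1)) r)"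
  have "ev p P = (\<Sum>r<p. of_int (c r) * omega p ^ r) - of_int (c (p - 1)) * (\<Sum>r<p. omega p ^ r)"
    by (simp add: P_def ev_sum ev_monom sum_subtractf sum_distrib_right algebra_simps)
  hence ev0: "ev p P = 0" using h sum_omega[OF p1] by simp
  have dP: "degree P \<le> p - 2"
    unfolding P_def
  proof (rule degree_sum_le)
    fix r assume "r \<in> {..<p}"
    thus "degree (monom (c r - c (p - 1)) r) \<le> p - 2"
      by (cases "r = p - 1") (auto simp: degree_monom_le intro: order.trans[OF degree_monom_le])
  qed simp
  have "P = 0"
  proof (rule ccontr)
    assume "P \<noteq> 0"
    thus False using no_small_root[OF pr _ _ ev0] dP p1 by linarith
  qed
  have hh: "coeff P r = (if r < p then c r - c (p - 1) else 0)" for r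
    by (simp add: P_def coeff_sum)
  show ?thesis
  proof (intro allI impI)
    fix r assume "r < p" with hh[of r] \<open>P = 0\<close> show "c r = c (p - 1)" by simp
  qed
qed




lemma frob_step:
  fixes x :: int
  assumes pr: "prime p"
  shows "int p dvd ((x + 1)^p - x^p - 1)"
proof -
  have p1: "p > 1" using pr prime_gt_1_nat by blast
  have "(x+1)^p = (\<Sum>k\<le>p. of_nat (p choose k) * x^k * 1^(p-k))" by (rule binomial_ring)
  also have "{..p} = insert 0 (insert p {1..<p})" using p1 by auto
  also have "(\<Sum>k\<in>insert 0 (insert p {1..<p}). of_nat (p choose k) * x^k * 1^(p-k)) =
      1 + (x^p + (\<Sum>k\<in>{1..<p}. of_nat (p choose k) * x^k))"
    using p1 by (simp add: sum.insert)
  finally have e: "(x + 1)^p - x^p - 1 = (\<Sum>k\<in>{1..<p}. of_nat (p choose k) * x^k)" by simp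
  have "int p dvd (\<Sum>k\<in>{1..<p}. of_nat (p choose k) * x^k)"
  proof (rule dvd_sum)
    fix k assume k: "k \<in> {1..<p}"
    hence "p dvd (p choose k)" using pr by (intro dvd_choose_prime) auto
    hence "int p dvd of_nat (p choose k)" by simp
    thus "int p dvd of_nat (p choose k) * x^k" by simp
  qed
  thus ?thesis using e by simp
qed

lemma frob_nat: assumes pr: "prime p" shows "int p dvd ((int n)^p - int n)"
proof (induction n)
  case 0 then show ?case using pr prime_gt_0_nat by (simp add: zero_power)
next
  case (Suc n)
  have eq: "(int (Suc n))^p - int (Suc n) = ((int n + 1)^p - (int n)^p - 1) + ((int n)^p - int n)"
    by (simp add: add.commute)
  show ?case unfolding eq by (rule dvd_add[OF frob_step[OF pr] Suc])
qed

lemma frob_int: assumes pr: "prime p" shows "int p dvd (x^p - x)"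
proof -
  have p0: "int p > 0" using pr prime_gt_0_nat by simp
  define y where "y = x mod int p"
  have y0: "y \<ge> 0" using p0 by (simp add: y_def)
  have c1: "[x = y] (mod int p)" by (simp add: y_def cong_def)
  have "[x^p - x = y^p - y] (mod int p)" by (intro cong_diff cong_pow c1)
  moreover have "int p dvd (y^p - y)" using frob_nat[OF pr, of "nat y"] y0 by simp
  ultimately show ?thesis by (metis cong_0_iff cong_iff_dvd_diff cong_trans cong_sym)
qed

lemma fermat_int:
  assumes pr: "prime p" and nd: "\<not> int p dvd x"
  shows "int p dvd (x^(p - 1) - 1)"
proof -
  have p1: "p \<ge> 1" using pr prime_gt_0_nat by (simp add: Suc_leI)
  have "x^p - x = x * (x^(p-1) - 1)" using p1
    by (simp add: right_diff_distrib power_eq_if[of x p])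
  hence "int p dvd x * (x^(p-1) - 1)" using frob_int[OF pr, of x] by simp
  moreover have "prime (int p)" using pr by simp
  ultimately show ?thesis using nd by (simp add: prime_dvd_mult_iff)
qed

definition psum :: "nat \<Rightarrow> nat \<Rightarrow> int" where "psum p k = (\<Sum>x<p. (int x)^k)"

lemma psum_small:
  assumes pr: "prime p"
  shows "k < p - 1 \<Longrightarrow> int p dvd psum p k"
proof (induction k rule: less_induct)
  case (less k)
  have tel: "(\<Sum>x<p. (int (Suc x))^(Suc k) - (int x)^(Suc k)) = (int p)^(Suc k)"
    by (subst sum_lessThan_telescope[where f = "\<lambda>n. (int n)^(Suc k)"]) simp
  have expand: "(int (Suc x))^(Suc k) - (int x)^(Suc k) =
        (\<Sum>t\<le>k. of_nat (Suc k choose t) * (int x)^t)" for x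
  proof -
    have "(int x + 1)^(Suc k) = (\<Sum>t\<le>Suc k. of_nat (Suc k choose t) * (int x)^t * 1^(Suc k - t))"
      by (rule binomial_ring)
    also have "\<dots> = (\<Sum>t\<le>k. of_nat (Suc k choose t) * (int x)^t) + (int x)^(Suc k)"
      by (simp add: sum.atMost_Suc)
    finally show ?thesis by (simp add: ac_simps)
  qed
  have "(int p)^(Suc k) = (\<Sum>x<p. \<Sum>t\<le>k. of_nat (Suc k choose t) * (int x)^t)"
    using tel expand by simp
  also have "\<dots> = (\<Sum>t\<le>k. of_nat (Suc k choose t) * psum p t)"
    by (subst sum.swap) (simp add: psum_def sum_distrib_left)
  also have "\<dots> = (\<Sum>t<k. of_nat (Suc k choose t) * psum p t) + of_nat (Suc k) * psum p k"
    by (simp add: lessThan_Suc_atMost[symmetric])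
  finally have eq: "of_nat (Suc k) * psum p k = (int p)^(Suc k) - (\<Sum>t<k. of_nat (Suc k choose t) * psum p t)"
    by simp
  have "int p dvd (\<Sum>t<k. of_nat (Suc k choose t) * psum p t)"
    by (intro dvd_sum) (use less in auto)
  moreover have "int p dvd (int p)^(Suc k)" by simp
  ultimately have "int p dvd of_nat (Suc k) * psum p k" using eq by simp
  moreover have "\<not> int p dvd of_nat (Suc k)"
  proof
    assume "int p dvd of_nat (Suc k)"
    hence "p dvd Suc k" using int_dvd_int_iff[of p "Suc k"] by simp
    hence "p \<le> Suc k" by (rule dvd_imp_le) simp
    thus False using less by simp
  qed
  moreover have "prime (int p)" using pr by simp
  ultimately show ?case by (simp add: prime_dvd_mult_iff)
qed

lemma psum_top:
  assumes pr: "prime p"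
  shows "int p dvd (psum p (p - 1) + 1)"
proof -
  have p1: "p > 1" using pr prime_gt_1_nat by blast
  have "{..<p} = insert 0 {1..<p}" using p1 by auto
  hence "psum p (p - 1) = (\<Sum>x\<in>{1..<p}. (int x)^(p-1))"
    using p1 by (simp add: psum_def zero_power)
  hence "psum p (p - 1) + 1 = (\<Sum>x\<in>{1..<p}. ((int x)^(p-1) - 1)) + int p"
    using p1 by (simp add: sum_subtractf)
  moreover have "int p dvd (\<Sum>x\<in>{1..<p}. ((int x)^(p-1) - 1))"
  proof (rule dvd_sum)
    fix x assume x: "x \<in> {1..<p}"
    have "\<not> int p dvd int x"
    proof
      assume "int p dvd int x"
      hence "p dvd x" by simp
      hence "p \<le> x" using x by (intro dvd_imp_le) auto
      thus False using x by simp
    qed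
    thus "int p dvd ((int x)^(p-1) - 1)" by (rule fermat_int[OF pr])
  qed
  ultimately show ?thesis by simp
qed

lemma poly_sum_expand: fixes G :: "int poly" shows "degree G \<le> n \<Longrightarrow> poly G y = (\<Sum>i\<le>n. coeff G i * y^i)"
proof -
  assume "degree G \<le> n"
  hence "poly G y = poly (\<Sum>i\<le>n. monom (coeff G i) i) y" by (simp add: poly_as_sum_of_monoms')
  thus ?thesis by (simp add: poly_sum poly_monom)
qed

lemma poly_sum_mod:
  fixes G :: "int poly"
  assumes pr: "prime p" and dG: "degree G \<le> p - 1"
  shows "int p dvd ((\<Sum>x<p. poly G (int x)) + coeff G (p - 1))"
proof -
  have p1: "p > 1" using pr prime_gt_1_nat by blast
  have "(\<Sum>x<p. poly G (int x)) = (\<Sum>x<p. \<Sum>i\<le>p-1. coeff G i * (int x)^i)"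
    using dG by (simp add: poly_sum_expand)
  also have "\<dots> = (\<Sum>i\<le>p-1. coeff G i * psum p i)"
    by (subst sum.swap) (simp add: psum_def sum_distrib_left)
  also have "\<dots> = (\<Sum>i<p-1. coeff G i * psum p i) + coeff G (p-1) * psum p (p-1)"
    by (simp add: lessThan_Suc_atMost[symmetric])
  finally have e: "(\<Sum>x<p. poly G (int x)) + coeff G (p - 1) =
     (\<Sum>i<p-1. coeff G i * psum p i) + coeff G (p-1) * (psum p (p-1) + 1)"
    by (simp add: algebra_simps)
  have "int p dvd (\<Sum>i<p-1. coeff G i * psum p i)"
    by (intro dvd_sum) (simp add: psum_small[OF pr])
  moreover have "int p dvd coeff G (p-1) * (psum p (p-1) + 1)"
    using psum_top[OF pr] by simp
  ultimately show ?thesis using e by simp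
qed

lemma interp:
  fixes f :: "nat \<Rightarrow> int"
  assumes pr: "prime p"
  shows "\<exists>F::int poly. degree F \<le> p - 1 \<and> (\<forall>i. 0 \<le> coeff F i \<and> coeff F i < int p) \<and>
            (\<forall>x<p. int p dvd (poly F (int x) - f x))"
proof -
  have p1: "p > 1" using pr prime_gt_1_nat by blast
  define F0 where "F0 = (\<Sum>a<p. smult (f a) (1 - [:- int a, 1:]^(p - 1)))"
  have dF0: "degree F0 \<le> p - 1"
    unfolding F0_def
  proof (rule degree_sum_le)
    fix a assume "a \<in> {..<p}"
    have "degree ([:- int a, 1:]^(p - 1)) \<le> p - 1"
      using degree_power_le[of "[:- int a, 1:]" "p - 1"] by simp
    hence "degree (1 - [:- int a, 1:]^(p - 1)) \<le> p - 1"
      by (intro order.trans[OF degree_diff_le]) auto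
    thus "degree (smult (f a) (1 - [:- int a, 1:]^(p - 1))) \<le> p - 1"
      by (intro order.trans[OF degree_smult_le])
  qed simp
  have vF0: "int p dvd (poly F0 (int x) - f x)" if x: "x < p" for x
  proof -
    have "poly F0 (int x) = (\<Sum>a<p. f a * (1 - (int x - int a)^(p - 1)))"
      by (simp add: F0_def poly_sum)
    also have "\<dots> = f x * (1 - (int x - int x)^(p-1)) + (\<Sum>a\<in>{..<p} - {x}. f a * (1 - (int x - int a)^(p - 1)))"
      using x by (simp add: sum.remove)
    also have "f x * (1 - (int x - int x)^(p-1)) = f x" using p1 by (simp add: zero_power)
    finally have e: "poly F0 (int x) - f x = (\<Sum>a\<in>{..<p} - {x}. f a * (1 - (int x - int a)^(p - 1)))"
      by simp
    have "int p dvd (\<Sum>a\<in>{..<p} - {x}. f a * (1 - (int x - int a)^(p - 1)))"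
    proof (rule dvd_sum)
      fix a assume a: "a \<in> {..<p} - {x}"
      have "\<not> int p dvd (int x - int a)"
      proof
        assume "int p dvd (int x - int a)"
        then obtain q where q: "int x - int a = int p * q" by (auto elim: dvdE)
        have h1: "\<bar>int x - int a\<bar> < int p" using a x by auto
        hence "int p * \<bar>q\<bar> < int p * 1" using q p1 by (simp add: abs_mult)
        hence "\<bar>q\<bar> < 1" using p1 by (simp add: mult_less_cancel_left)
        hence "q = 0" by simp
        thus False using q a by simp
      qed
      hence "int p dvd ((int x - int a)^(p-1) - 1)" by (rule fermat_int[OF pr])
      hence "int p dvd (1 - (int x - int a)^(p-1))" by (metis dvd_minus_iff minus_diff_eq)
      thus "int p dvd f a * (1 - (int x - int a)^(p - 1))" by simp
    qed
    thus ?thesis using e by simp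
  qed
  define F where "F = map_poly (\<lambda>c. c mod int p) F0"
  have cF: "coeff F i = coeff F0 i mod int p" for i by (simp add: F_def coeff_map_poly)
  have dF: "degree F \<le> p - 1" using dF0 map_poly_degree_leq[of "\<lambda>c. c mod int p" F0] by (simp add: F_def)
  have p0: "int p > 0" using p1 by simp
  have "int p dvd (poly F (int x) - f x)" if x: "x < p" for x
  proof -
    have "poly F (int x) - poly F0 (int x) = (\<Sum>i\<le>p-1. (coeff F i - coeff F0 i) * (int x)^i)"
      using dF dF0 by (simp add: poly_sum_expand sum_subtractf algebra_simps)
    moreover have "int p dvd (\<Sum>i\<le>p-1. (coeff F i - coeff F0 i) * (int x)^i)"
    proof (intro dvd_sum dvd_mult2)
      fix i
      show "int p dvd coeff F i - coeff F0 i"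
        using mod_eq_dvd_iff[of "coeff F0 i mod int p" "int p" "coeff F0 i"] by (simp add: cF)
    qed
    ultimately have "int p dvd (poly F (int x) - poly F0 (int x))" by simp
    thus ?thesis using vF0[OF x] by (metis dvd_add diff_add_cancel add_diff_eq)
  qed
  moreover have "\<forall>i. 0 \<le> coeff F i \<and> coeff F i < int p" using p0 by (simp add: cF)
  ultimately show ?thesis using dF by blast
qed




lemma shift_inv:
  fixes x p s :: nat
  assumes "x < p" "s < p"
  shows "(x + p - (x + p - s) mod p) mod p = s"
proof -
  have p0: "p > 0" using assms by simp
  define t where "t = (x + p - s) mod p"
  have tp: "t < p" using p0 by (simp add: t_def)
  have ti: "int t = (int x + int p - int s) mod int p"
    using assms by (simp add: t_def zmod_int of_nat_diff)
  have "int ((x + p - (x + p - s) mod p) mod p) = (int x + int p - int t) mod int p"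
    using tp by (simp add: t_def[symmetric] zmod_int of_nat_diff)
  also have "\<dots> = (int x + int p - (int x + int p - int s) mod int p) mod int p" by (simp add: ti)
  also have "\<dots> = (int x + int p - (int x + int p - int s)) mod int p"
    by (simp add: mod_diff_right_eq)
  also have "\<dots> = int s" using assms by simp
  finally show ?thesis by simp
qed




lemma bij_shift:
  fixes x p :: nat assumes "x < p"
  shows "bij_betw (\<lambda>s. (x + p - s) mod p) {..<p} {..<p}"
  by (rule bij_betw_byWitness[where f' = "\<lambda>s. (x + p - s) mod p"]) (use assms shift_inv in auto)

lemma reindex_shift:
  fixes x p :: nat assumes "x < p"
  shows "(\<Sum>y<p. g y) = (\<Sum>s<p. g ((x + p - s) mod p))"
  by (rule sum.reindex_bij_betw[OF bij_shift[OF assms], symmetric])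

lemma shift_cong:
  fixes x p s :: nat assumes "x < p" "s < p"
  shows "int p dvd ((int ((x + p - s) mod p) - int x) - (- int s))"
proof -
  have "int ((x + p - s) mod p) = (int x + int p - int s) mod int p"
    using assms by (simp add: zmod_int of_nat_diff)
  moreover have "int p dvd ((int x + int p - int s) mod int p - (int x + int p - int s))"
    using mod_eq_dvd_iff[of "(int x + int p - int s) mod int p" "int p" "int x + int p - int s"] by simp
  ultimately have h: "int p dvd (int ((x + p - s) mod p) - (int x + int p - int s))" by simp
  have e: "(int ((x + p - s) mod p) - int x) - (- int s) = (int ((x + p - s) mod p) - (int x + int p - int s)) + int p"
    by simp
  show ?thesis unfolding e by (rule dvd_add[OF h dvd_refl])
qed

definition Asum :: "nat \<Rightarrow> int poly \<Rightarrow> nat \<Rightarrow> nat \<Rightarrow> int" where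
  "Asum p F l i = (\<Sum>x<p. (int x)^l * (poly F (int x))^i)"

lemma Asum_poly: "Asum p F l i = (\<Sum>x<p. poly (monom 1 l * F^i) (int x))"
  by (simp add: Asum_def poly_monom)

lemma deg_G: assumes "(F :: int poly) \<noteq> 0" shows "degree (monom 1 l * F^i) = l + i * degree F"
proof -
  have m: "monom (1::int) l \<noteq> 0" by simp
  have f: "F^i \<noteq> 0" using assms by simp
  show ?thesis using degree_mult_eq[OF m f] degree_power_eq[OF assms] by (simp add: degree_monom_eq)
qed

lemma lead_G: "lead_coeff (monom 1 l * (F :: int poly)^i) = lead_coeff F ^ i"
  by (simp only: lead_coeff_mult lead_coeff_power lead_coeff_monom)

lemma Asum_low:
  assumes pr: "prime p" and F0: "F \<noteq> 0" and lt: "l + i * degree F < p - 1"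
  shows "int p dvd Asum p F l i"
proof -
  have d: "degree (monom 1 l * F^i) < p - 1" using deg_G[OF F0] lt by simp
  have "coeff (monom 1 l * F^i) (p - 1) = 0" using d by (simp add: coeff_eq_0)
  thus ?thesis using poly_sum_mod[OF pr, of "monom 1 l * F^i"] d by (simp add: Asum_poly)
qed

lemma Asum_top:
  assumes pr: "prime p" and F0: "F \<noteq> 0" and eq: "l + i * degree F = p - 1"
  shows "int p dvd Asum p F l i + lead_coeff F ^ i"
proof -
  have d: "degree (monom 1 l * F^i) = p - 1" using deg_G[OF F0] eq by simp
  have "coeff (monom 1 l * F^i) (p - 1) = lead_coeff F ^ i" using d lead_G[of l F i] by simp
  thus ?thesis using poly_sum_mod[OF pr, of "monom 1 l * F^i"] d by (simp add: Asum_poly)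
qed

lemma sum4_swap:
  "(\<Sum>x\<in>X. \<Sum>y\<in>Y. \<Sum>l\<in>L. \<Sum>i\<in>I. f x y l i) = (\<Sum>l\<in>L. \<Sum>i\<in>I. \<Sum>x\<in>X. \<Sum>y\<in>Y. f x y l i)"
proof -
  have "(\<Sum>x\<in>X. \<Sum>y\<in>Y. \<Sum>l\<in>L. \<Sum>i\<in>I. f x y l i) = (\<Sum>x\<in>X. \<Sum>l\<in>L. \<Sum>y\<in>Y. \<Sum>i\<in>I. f x y l i)"
    by (rule sum.cong[OF refl], rule sum.swap)
  also have "\<dots> = (\<Sum>l\<in>L. \<Sum>x\<in>X. \<Sum>y\<in>Y. \<Sum>i\<in>I. f x y l i)" by (rule sum.swap)
  also have "\<dots> = (\<Sum>l\<in>L. \<Sum>x\<in>X. \<Sum>i\<in>I. \<Sum>y\<in>Y. f x y l i)"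
    by (rule sum.cong[OF refl], rule sum.cong[OF refl], rule sum.swap)
  also have "\<dots> = (\<Sum>l\<in>L. \<Sum>i\<in>I. \<Sum>x\<in>X. \<Sum>y\<in>Y. f x y l i)"
    by (rule sum.cong[OF refl], rule sum.swap)
  finally show ?thesis .
qed

lemma T_expand:
  fixes F :: "int poly"
  shows "(\<Sum>x<p. \<Sum>y<p. (int y - int x)^J * (poly F (int y) - poly F (int x))^K) =
   (\<Sum>l\<le>J. \<Sum>i\<le>K. of_nat (J choose l) * of_nat (K choose i) * (-1)^(J-l) * (-1)^(K-i) *
      (Asum p F l i * Asum p F (J-l) (K-i)))"
proof -
  define c where "c l i = (of_nat (J choose l) * of_nat (K choose i) * (-1)^(J-l) * (-1)^(K-i) :: int)" for l i
  have hterm: "(int y - int x)^J * (poly F (int y) - poly F (int x))^K =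
     (\<Sum>l\<le>J. \<Sum>i\<le>K. c l i * (((int y)^l * (poly F (int y))^i) * ((int x)^(J-l) * (poly F (int x))^(K-i))))"
    for x y :: nat
  proof -
    have e1: "(int y - int x)^J = (\<Sum>l\<le>J. of_nat (J choose l) * (int y)^l * (- int x)^(J-l))"
      using binomial_ring[of "int y" "- int x" J] by simp
    have e2: "(poly F (int y) - poly F (int x))^K =
        (\<Sum>i\<le>K. of_nat (K choose i) * (poly F (int y))^i * (- poly F (int x))^(K-i))"
      using binomial_ring[of "poly F (int y)" "- poly F (int x)" K] by simp
    have "(int y - int x)^J * (poly F (int y) - poly F (int x))^K =
      (\<Sum>l\<le>J. \<Sum>i\<le>K. (of_nat (J choose l) * (int y)^l * (- int x)^(J-l)) *
          (of_nat (K choose i) * (poly F (int y))^i * (- poly F (int x))^(K-i)))"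
      unfolding e1 e2 by (rule sum_product)
    also have "\<dots> = (\<Sum>l\<le>J. \<Sum>i\<le>K. c l i * (((int y)^l * (poly F (int y))^i) * ((int x)^(J-l) * (poly F (int x))^(K-i))))"
      by (intro sum.cong refl) (simp add: c_def power_minus[of "int x"] power_minus[of "poly F (int x)"] mult_ac)
    finally show ?thesis .
  qed
  have "(\<Sum>x<p. \<Sum>y<p. (int y - int x)^J * (poly F (int y) - poly F (int x))^K) =
     (\<Sum>x<p. \<Sum>y<p. \<Sum>l\<le>J. \<Sum>i\<le>K. c l i * (((int y)^l * (poly F (int y))^i) * ((int x)^(J-l) * (poly F (int x))^(K-i))))"
    by (simp add: hterm)
  also have "\<dots> = (\<Sum>l\<le>J. \<Sum>i\<le>K. \<Sum>x<p. \<Sum>y<p. c l i * (((int y)^l * (poly F (int y))^i) * ((int x)^(J-l) * (poly F (int x))^(K-i))))"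
    by (rule sum4_swap)
  also have "\<dots> = (\<Sum>l\<le>J. \<Sum>i\<le>K. c l i * (Asum p F l i * Asum p F (J-l) (K-i)))"
  proof (intro sum.cong refl)
    fix l i
    have "Asum p F l i * Asum p F (J-l) (K-i) =
       (\<Sum>y<p. \<Sum>x<p. ((int y)^l * (poly F (int y))^i) * ((int x)^(J-l) * (poly F (int x))^(K-i)))"
      unfolding Asum_def by (rule sum_product)
    also have "\<dots> = (\<Sum>x<p. \<Sum>y<p. ((int y)^l * (poly F (int y))^i) * ((int x)^(J-l) * (poly F (int x))^(K-i)))"
      by (rule sum.swap)
    finally show "(\<Sum>x<p. \<Sum>y<p. c l i * (((int y)^l * (poly F (int y))^i) * ((int x)^(J-l) * (poly F (int x))^(K-i)))) =
       c l i * (Asum p F l i * Asum p F (J-l) (K-i))"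
      by (simp add: sum_distrib_left)
  qed
  finally show ?thesis by (simp add: c_def)
qed




lemma binom_not_dvd:
  assumes pr: "prime p" and n: "n < p" and k: "k \<le> n"
  shows "\<not> int p dvd int (n choose k)"
proof
  assume "int p dvd int (n choose k)"
  hence "p dvd (n choose k)" by simp
  hence "p dvd fact k * fact (n - k) * (n choose k)" by simp
  hence "p dvd fact n" using binomial_fact_lemma[OF k] by simp
  hence "p \<le> n" using prime_dvd_fact_iff[OF pr] by simp
  thus False using n by simp
qed

lemma dvd_neg_one_pow: "(c::int) dvd ((-1)^a * y) \<Longrightarrow> c dvd y"
  by (cases "even a") auto

lemma planar_contra:
  fixes F :: "int poly"
  assumes pr: "prime p" and d3: "3 \<le> degree F" and dp: "degree F \<le> p - 1"
    and lc: "\<not> int p dvd lead_coeff F"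
    and hyp: "\<And>s k. 0 < s \<Longrightarrow> s < p \<Longrightarrow> k < p - 1 \<Longrightarrow>
       int p dvd (\<Sum>x<p. (poly F (int ((x + p - s) mod p)) - poly F (int x))^k)"
  shows False
proof -
  define d where "d = degree F"
  define m where "m = (p - 1) div d"
  define r where "r = (p - 1) mod d"
  define J where "J = 2 * r"
  define K where "K = 2 * m"
  have F0: "F \<noteq> 0" using d3 by auto
  have d0: "d > 0" using d3 d_def by simp
  have d3': "d \<ge> 3" using d3 d_def by simp
  have mdr: "m * d + r = p - 1" by (simp add: m_def r_def)
  have rd: "r < d" using d0 by (simp add: r_def)
  have m1: "m \<ge> 1" using dp d0 by (simp add: m_def d_def div_greater_zero_iff Suc_le_eq)
  have h3: "3 * m \<le> d * m" using d3' by (intro mult_right_mono) auto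
  have m3: "3 * m \<le> p - 1" using h3 mdr[unfolded mult.commute[of m d]] by linarith
  have Kp: "K < p - 1" using m3 m1 by (simp add: K_def)
  have K0: "K > 0" using m1 by (simp add: K_def)
  have "d \<le> m * d" using m1 by simp
  hence rJ: "2 * r < p" using mdr rd by linarith
  have mK: "2 * m < p" using Kp K_def by simp
  define T where "T = (\<Sum>x<p. \<Sum>y<p. (int y - int x)^J * (poly F (int y) - poly F (int x))^K)"
  have T1: "int p dvd T"
  proof -
    define g where "g x s = (int ((x + p - s) mod p) - int x)^J * (poly F (int ((x + p - s) mod p)) - poly F (int x))^K" for x s
    define h where "h x s = (- int s)^J * (poly F (int ((x + p - s) mod p)) - poly F (int x))^K" for x s
    have Tg: "T = (\<Sum>x<p. \<Sum>s<p. g x s)"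
      unfolding T_def
    proof (rule sum.cong[OF refl])
      fix x assume "x \<in> {..<p}"
      hence x: "x < p" by simp
      show "(\<Sum>y<p. (int y - int x)^J * (poly F (int y) - poly F (int x))^K) = (\<Sum>s<p. g x s)"
        unfolding g_def by (rule reindex_shift[OF x])
    qed
    have dg: "int p dvd (g x s - h x s)" if x: "x < p" and s: "s < p" for x s
    proof -
      have "[int ((x + p - s) mod p) - int x = - int s] (mod int p)"
        using shift_cong[OF x s] by (simp add: cong_iff_dvd_diff)
      hence "[(int ((x + p - s) mod p) - int x)^J = (- int s)^J] (mod int p)" by (rule cong_pow)
      hence "int p dvd ((int ((x + p - s) mod p) - int x)^J - (- int s)^J)" by (simp add: cong_iff_dvd_diff)
      hence "int p dvd ((int ((x + p - s) mod p) - int x)^J - (- int s)^J) * (poly F (int ((x + p - s) mod p)) - poly F (int x))^K"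
        by simp
      thus ?thesis by (simp add: g_def h_def algebra_simps)
    qed
    have dh: "int p dvd (\<Sum>x<p. \<Sum>s<p. h x s)"
    proof -
      have "(\<Sum>x<p. \<Sum>s<p. h x s) = (\<Sum>s<p. \<Sum>x<p. h x s)" by (rule sum.swap)
      also have "\<dots> = (\<Sum>s<p. (- int s)^J * (\<Sum>x<p. (poly F (int ((x + p - s) mod p)) - poly F (int x))^K))"
        by (simp add: h_def sum_distrib_left)
      finally have e: "(\<Sum>x<p. \<Sum>s<p. h x s) = (\<Sum>s<p. (- int s)^J * (\<Sum>x<p. (poly F (int ((x + p - s) mod p)) - poly F (int x))^K))" .
      have "int p dvd (\<Sum>s<p. (- int s)^J * (\<Sum>x<p. (poly F (int ((x + p - s) mod p)) - poly F (int x))^K))"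
      proof (rule dvd_sum)
        fix s assume s: "s \<in> {..<p}"
        show "int p dvd (- int s)^J * (\<Sum>x<p. (poly F (int ((x + p - s) mod p)) - poly F (int x))^K)"
        proof (cases "s = 0")
          case True
          have "(\<Sum>x<p. (poly F (int ((x + p - s) mod p)) - poly F (int x))^K) = 0"
            using K0 True by (intro sum.neutral) auto
          thus ?thesis by simp
        next
          case False
          thus ?thesis using hyp[of s K] s Kp by simp
        qed
      qed
      thus ?thesis using e by simp
    qed
    have "T = (\<Sum>x<p. \<Sum>s<p. h x s) + (\<Sum>x<p. \<Sum>s<p. g x s - h x s)"
      by (simp add: Tg sum.distrib[symmetric])
    moreover have "int p dvd (\<Sum>x<p. \<Sum>s<p. g x s - h x s)"
      by (intro dvd_sum dg) auto
    ultimately show ?thesis using dh by simp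
  qed
  define w where "w l i = of_nat (J choose l) * of_nat (K choose i) * (-1)^(J-l) * (-1)^(K-i) *
      (Asum p F l i * Asum p F (J-l) (K-i))" for l i
  have T2: "T = (\<Sum>l\<le>J. \<Sum>i\<le>K. w l i)" unfolding T_def w_def by (rule T_expand)
  have rm: "(r, m) \<in> {..J} \<times> {..K}" by (simp add: J_def K_def)
  have T3: "T = w r m + (\<Sum>z \<in> ({..J} \<times> {..K}) - {(r,m)}. w (fst z) (snd z))"
  proof -
    have "T = (\<Sum>z \<in> {..J} \<times> {..K}. w (fst z) (snd z))"
      unfolding T2 sum.cartesian_product by (simp add: case_prod_beta)
    also have "\<dots> = w r m + (\<Sum>z \<in> ({..J} \<times> {..K}) - {(r,m)}. w (fst z) (snd z))"
      using rm by (subst sum.remove[OF _ rm]) auto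
    finally show ?thesis .
  qed
  have rest: "int p dvd (\<Sum>z \<in> ({..J} \<times> {..K}) - {(r,m)}. w (fst z) (snd z))"
  proof (rule dvd_sum)
    fix z assume z: "z \<in> ({..J} \<times> {..K}) - {(r,m)}"
    obtain l i where zli: "z = (l, i)" by (cases z)
    have lJ: "l \<le> J" and iK: "i \<le> K" and ne: "(l, i) \<noteq> (r, m)" using z zli by auto
    have "int p dvd Asum p F l i * Asum p F (J-l) (K-i)"
    proof (cases "l + i * d < p - 1")
      case True
      thus ?thesis using Asum_low[OF pr F0, of l i] by (simp add: d_def)
    next
      case False
      have sum2: "(J - l) + (K - i) * d + (l + i * d) = 2 * (p - 1)"
      proof -
        have "(K - i) * d + i * d = ((K - i) + i) * d" by (simp only: add_mult_distrib)
        also have "\<dots> = K * d" using iK by simp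
        finally have "(K - i) * d + i * d = K * d" .
        hence "(J - l) + (K - i) * d + (l + i * d) = J + K * d" using lJ by simp
        also have "\<dots> = 2 * (p - 1)" using mdr by (simp add: J_def K_def)
        finally show ?thesis .
      qed
      show ?thesis
      proof (cases "l + i * d = p - 1")
        case True
        have "i = m"
        proof (rule ccontr)
          assume "i \<noteq> m"
          hence "i < m \<or> m < i" by auto
          thus False
          proof
            assume "i < m"
            hence "(i + 1) * d \<le> m * d" by (intro mult_right_mono) auto
            hence "l \<ge> r + d" using True mdr by simp
            thus False using lJ rd J_def by simp
          next
            assume "m < i"
            hence "(m + 1) * d \<le> i * d" by (intro mult_right_mono) auto
            thus False using True mdr rd by simp
          qed
        qed
        hence "l = r" using True mdr by simp
        thus ?thesis using ne \<open>i = m\<close> by simp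
      next
        case False2: False
        hence "(J - l) + (K - i) * d < p - 1" using False sum2 by linarith
        thus ?thesis using Asum_low[OF pr F0, of "J - l" "K - i"] by (simp add: d_def)
      qed
    qed
    thus "int p dvd w (fst z) (snd z)" by (simp add: zli w_def)
  qed
  have "w r m = T - (\<Sum>z \<in> ({..J} \<times> {..K}) - {(r,m)}. w (fst z) (snd z))" using T3 by simp
  hence wd: "int p dvd w r m" using T1 rest by (simp add: dvd_diff)
  have jr: "J - r = r" by (simp add: J_def)
  have km: "K - m = m" by (simp add: K_def)
  have wrm: "w r m = (-1)^r * ((-1)^m * (of_nat (J choose r) * (of_nat (K choose m) * (Asum p F r m * Asum p F r m))))"
    unfolding w_def jr km by (simp only: mult_ac)
  define X where "X = of_nat (J choose r) * (of_nat (K choose m) * (Asum p F r m * Asum p F r m))"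
  have a1: "int p dvd (-1)^r * ((-1)^m * X)" using wd unfolding wrm X_def .
  have a2: "int p dvd (-1)^m * X" by (rule dvd_neg_one_pow[OF a1])
  have a3: "int p dvd X" by (rule dvd_neg_one_pow[OF a2])
  have pi: "prime (int p)" using pr by simp
  have b1: "\<not> int p dvd of_nat (J choose r)" using binom_not_dvd[OF pr rJ, of r] by (simp add: J_def)
  have b2: "\<not> int p dvd of_nat (K choose m)" using binom_not_dvd[OF pr mK, of m] by (simp add: K_def)
  have "int p dvd Asum p F r m * Asum p F r m"
    using a3 b1 b2 pi unfolding X_def by (simp add: prime_dvd_mult_iff)
  hence c1: "int p dvd Asum p F r m" using pi by (simp add: prime_dvd_mult_iff)
  have c2: "int p dvd Asum p F r m + lead_coeff F ^ m"
    using Asum_top[OF pr F0, of r m] mdr by (simp add: d_def add.commute)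
  have "lead_coeff F ^ m = (Asum p F r m + lead_coeff F ^ m) - Asum p F r m" by simp
  hence "int p dvd lead_coeff F ^ m" using c1 c2 by (metis dvd_diff)
  hence "int p dvd lead_coeff F" using pi prime_dvd_power by blast
  thus False using lc by simp
qed




lemma root_pow_omega:
  assumes p: "p > 0"
  shows "root_pow p m = omega p ^ nat (m mod int p)"
proof -
  define q where "q = m div int p"
  define t where "t = m mod int p"
  have mq: "m = int p * q + t" by (simp add: q_def t_def)
  have t0: "t \<ge> 0" using p by (simp add: t_def)
  have rm: "real_of_int m = real p * real_of_int q + real_of_int t" using mq by simp
  have "2 * pi * (real p * real_of_int q + real_of_int t) / real p = 2 * pi * real_of_int q + 2 * pi * real_of_int t / real p"
    using p by (simp add: field_simps)
  hence "2 * pi * real_of_int m / real p = 2 * pi * real_of_int q + 2 * pi * real_of_int t / real p"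
    by (simp only: rm)
  hence "root_pow p m = cis (2 * pi * real_of_int q + 2 * pi * real_of_int t / real p)"
    by (simp only: root_pow_def)
  also have "\<dots> = cis (2 * pi * real_of_int q) * cis (2 * pi * real_of_int t / real p)"
    by (rule cis_mult[symmetric])
  also have "cis (2 * pi * real_of_int q) = 1" by (rule cis_multiple_2pi) simp
  also have "cis (2 * pi * real_of_int t / real p) = omega p ^ nat t"
    using t0 by (simp add: omega_pow)
  finally show ?thesis by (simp add: t_def)
qed


lemma root_pow_cnj: "root_pow p a * cnj (root_pow p b) = root_pow p (a - b)"
proof -
  have "2 * pi * real_of_int a / real p + - (2 * pi * real_of_int b / real p) = 2 * pi * real_of_int (a - b) / real p"
    by (simp add: diff_divide_distrib right_diff_distrib)
  thus ?thesis by (simp only: root_pow_def cis_cnj cis_mult)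
qed

lemma root_pow_cong: "p > 0 \<Longrightarrow> [a = b] (mod int p) \<Longrightarrow> root_pow p a = root_pow p b"
  by (simp add: root_pow_omega cong_def)

lemma fiber_sum:
  fixes \<phi> :: "nat \<Rightarrow> 'a::comm_ring_1" and g :: "nat \<Rightarrow> nat" and n p :: nat
  assumes "\<forall>j<n. g j < p"
  shows "(\<Sum>j<n. \<phi> (g j)) = (\<Sum>r<p. of_nat (card {j\<in>{..<n}. g j = r}) * \<phi> r)"
proof -
  have "(\<Sum>j<n. \<phi> (g j)) = (\<Sum>j<n. \<Sum>r<p. if g j = r then \<phi> r else 0)"
    using assms by (intro sum.cong refl) (simp add: sum.delta)
  also have "\<dots> = (\<Sum>r<p. \<Sum>j<n. if g j = r then \<phi> r else 0)" by (rule sum.swap)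
  also have "\<dots> = (\<Sum>r<p. of_nat (card {j\<in>{..<n}. g j = r}) * \<phi> r)"
  proof (intro sum.cong refl)
    fix r
    have "(\<Sum>j\<in>{j\<in>{..<n}. g j = r}. \<phi> r) = (\<Sum>j<n. if g j = r then \<phi> r else 0)"
      by (rule sum.inter_filter) simp
    hence "(\<Sum>j<n. if g j = r then \<phi> r else 0) = (\<Sum>j\<in>{j\<in>{..<n}. g j = r}. \<phi> r)" by (rule sym)
    also have "\<dots> = of_nat (card {j\<in>{..<n}. g j = r}) * \<phi> r" by (rule sum_constant)
    finally show "(\<Sum>j<n. if g j = r then \<phi> r else 0) = of_nat (card {j\<in>{..<n}. g j = r}) * \<phi> r" .
  qed
  finally show ?thesis .
qed


lemma fibers_one:
  assumes pr: "prime p" and g: "\<forall>j<p. g j < p" and z: "(\<Sum>j<p. omega p ^ g j) = 0"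
  shows "\<forall>r<p. card {j\<in>{..<p}. g j = r} = 1"
proof -
  define c where "c r = int (card {j\<in>{..<p}. g j = r})" for r
  have fs: "(\<Sum>j<p. omega p ^ g j) = (\<Sum>r<p. of_nat (card {j\<in>{..<p}. g j = r}) * omega p ^ r)"
    by (rule fiber_sum[OF g])
  have "(\<Sum>r<p. of_int (c r) * omega p ^ r) = (\<Sum>r<p. of_nat (card {j\<in>{..<p}. g j = r}) * omega p ^ r)"
    by (simp add: c_def)
  hence "(\<Sum>r<p. of_int (c r) * omega p ^ r) = 0" using fs z by simp
  hence eq: "\<forall>r<p. c r = c (p - 1)" by (rule vanishing[OF pr])
  have fs1: "(\<Sum>j<p. (1::int)) = (\<Sum>r<p. of_nat (card {j\<in>{..<p}. g j = r}) * 1)"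
    by (rule fiber_sum[OF g])
  have "int p = (\<Sum>r<p. c r)" using fs1 by (simp add: c_def)
  also have "\<dots> = (\<Sum>r<p. c (p - 1))" proof (rule sum.cong[OF refl])
    fix r assume "r \<in> {..<p}" thus "c r = c (p - 1)" using eq by blast
  qed
  also have "\<dots> = int p * c (p - 1)" by simp
  finally have e1: "int p * 1 = int p * c (p - 1)" by simp
  have "int p \<noteq> 0" using pr prime_gt_0_nat by simp
  hence c1: "c (p - 1) = 1" using e1 by simp
  show ?thesis
  proof (intro allI impI)
    fix r assume "r < p"
    hence "c r = c (p - 1)" using eq by blast
    hence "c r = 1" using c1 by simp
    thus "card {j\<in>{..<p}. g j = r} = 1" by (simp add: c_def)
  qed
qed




lemma circ_shift:
  assumes p0: "p > 0" and circ: "circulant_mod p M" and i: "i < p" and j: "j < p"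
  shows "[M i j = M 0 ((j + p - i) mod p)] (mod int p)"
proof -
  have l: "(j + p - i) mod p < p" using p0 by simp
  have "(int j - int i) mod int p = (int ((j + p - i) mod p) - int 0) mod int p"
  proof -
    have "int ((j + p - i) mod p) = (int j + int p - int i) mod int p"
      using i by (simp add: zmod_int of_nat_diff)
    moreover have "int j + int p - int i = (int j - int i) + int p" by simp
    ultimately have "(int ((j + p - i) mod p) - int 0) mod int p = ((int j - int i) + int p) mod int p"
      by (simp only: of_nat_0 diff_zero mod_mod_trivial)
    also have "\<dots> = (int j - int i) mod int p" by (rule mod_add_self2)
    finally show ?thesis by simp
  qed
  thus ?thesis using circ i j l p0 unfolding circulant_mod_def by blast
qed

lemma nat_mod_lt: "p > 0 \<Longrightarrow> nat (x mod int p) < p"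
  by (simp add: nat_less_iff)

lemma lead_not_dvd:
  assumes F0: "F \<noteq> 0" and Fc: "\<forall>i. 0 \<le> coeff F i \<and> coeff F i < int p"
  shows "\<not> int p dvd lead_coeff (F :: int poly)"
proof
  assume h: "int p dvd lead_coeff F"
  have l0: "lead_coeff F > 0" using F0 Fc by (metis leading_coeff_0_iff order_le_neq_trans)
  have "int p \<le> lead_coeff F" using h l0 by (rule zdvd_imp_le)
  thus False using Fc by (metis not_less)
qed

lemma poly_expand2:
  fixes F :: "int poly"
  assumes "degree F \<le> 2"
  shows "poly F z = coeff F 0 + coeff F 1 * z + coeff F 2 * z^2"
  using poly_sum_expand[OF assms, of z] by (simp add: numeral_2_eq_2)

lemma forward:
  fixes p :: nat and M :: "nat \<Rightarrow> nat \<Rightarrow> int"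
  assumes pr: "prime p" and p3: "p \<ge> 3" and circ: "circulant_mod p M"
    and H: "complex_hadamard p (\<lambda>i j. root_pow p (M i j))"
  shows "\<exists>a b c :: int. \<not> [a = 0] (mod int p) \<and>
       (\<forall>j<p. [M 0 j = a * (int j)^2 + b * int j + c] (mod int p))"
proof -
  have p0: "p > 0" using p3 by simp
  define f where "f j = M 0 j" for j
  define g where "g s j = nat ((f ((j + p - s) mod p) - f j) mod int p)" for s j
  have gl: "g s j < p" for s j using p0 by (simp add: g_def nat_mod_lt)
  have fib: "\<forall>r<p. card {j\<in>{..<p}. g s j = r} = 1" if s0: "0 < s" and sp: "s < p" for s
  proof -
    have z: "(\<Sum>j<p. root_pow p (M s j) * cnj (root_pow p (M 0 j))) = 0"
      using H s0 sp unfolding complex_hadamard_def by auto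
    have teq: "root_pow p (M s j) * cnj (root_pow p (M 0 j)) = omega p ^ g s j" if j: "j < p" for j
    proof -
      have "root_pow p (M s j) * cnj (root_pow p (M 0 j)) = root_pow p (M s j - M 0 j)" by (rule root_pow_cnj)
      also have "\<dots> = root_pow p (f ((j + p - s) mod p) - f j)"
      proof (rule root_pow_cong[OF p0])
        show "[M s j - M 0 j = f ((j + p - s) mod p) - f j] (mod int p)"
          unfolding f_def by (intro cong_diff circ_shift[OF p0 circ sp j] cong_refl)
      qed
      also have "\<dots> = omega p ^ g s j" by (simp add: root_pow_omega[OF p0] g_def)
      finally show ?thesis .
    qed
    have "(\<Sum>j<p. omega p ^ g s j) = 0" using z teq by simp
    thus ?thesis using fibers_one[OF pr] gl by blast
  qed
  obtain F where Fd: "degree F \<le> p - 1" and Fc: "\<forall>i. 0 \<le> coeff F i \<and> coeff F i < int p"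
     and Fv: "\<forall>x<p. int p dvd (poly F (int x) - f x)" using interp[OF pr, of f] by blast
  have Fcong: "[poly F (int x) = f x] (mod int p)" if "x < p" for x
    using Fv that by (simp add: cong_iff_dvd_diff)
  have gcong: "[f ((x + p - s) mod p) - f x = int (g s x)] (mod int p)" for s x
    using p0 by (simp add: g_def cong_def)
  have hyp: "int p dvd (\<Sum>x<p. (poly F (int ((x + p - s) mod p)) - poly F (int x))^k)"
    if s0: "0 < s" and sp: "s < p" and kp: "k < p - 1" for s k
  proof -
    have c1: "[(\<Sum>x<p. (poly F (int ((x + p - s) mod p)) - poly F (int x))^k) = (\<Sum>x<p. (int (g s x))^k)] (mod int p)"
    proof (rule cong_sum)
      fix x assume "x \<in> {..<p}" hence x: "x < p" by simp
      have y: "(x + p - s) mod p < p" using p0 by simp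
      have "[poly F (int ((x + p - s) mod p)) - poly F (int x) = f ((x + p - s) mod p) - f x] (mod int p)"
        by (intro cong_diff Fcong x y)
      hence "[poly F (int ((x + p - s) mod p)) - poly F (int x) = int (g s x)] (mod int p)"
        using gcong by (rule cong_trans)
      thus "[(poly F (int ((x + p - s) mod p)) - poly F (int x))^k = (int (g s x))^k] (mod int p)"
        by (rule cong_pow)
    qed
    have "(\<Sum>x<p. (int (g s x))^k) = (\<Sum>r<p. of_nat (card {j\<in>{..<p}. g s j = r}) * (int r)^k)"
      by (rule fiber_sum) (simp add: gl)
    also have "\<dots> = psum p k"
      unfolding psum_def
    proof (rule sum.cong[OF refl])
      fix r assume "r \<in> {..<p}"
      hence "card {j\<in>{..<p}. g s j = r} = 1" using fib[OF s0 sp] by blast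
      thus "of_nat (card {j\<in>{..<p}. g s j = r}) * (int r)^k = (int r)^k" by simp
    qed
    finally have "[(\<Sum>x<p. (poly F (int ((x + p - s) mod p)) - poly F (int x))^k) = psum p k] (mod int p)"
      using c1 by simp
    thus ?thesis using psum_small[OF pr kp] by (simp add: cong_dvd_iff)
  qed
  consider (lo) "degree F \<le> 1" | (two) "degree F = 2" | (hi) "degree F \<ge> 3" by linarith
  then show ?thesis
  proof cases
    case hi
    hence F0: "F \<noteq> 0" by auto
    have False by (rule planar_contra[OF pr hi Fd lead_not_dvd[OF F0 Fc] hyp])
    thus ?thesis ..
  next
    case two
    hence F0: "F \<noteq> 0" by auto
    define a where "a = coeff F 2"
    define b where "b = coeff F 1"
    define c where "c = coeff F 0"
    have "\<not> int p dvd a" using lead_not_dvd[OF F0 Fc] two by (simp add: a_def)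
    hence an: "\<not> [a = 0] (mod int p)" by (simp add: cong_0_iff)
    have "\<forall>j<p. [M 0 j = a * (int j)^2 + b * int j + c] (mod int p)"
    proof (intro allI impI)
      fix j assume j: "j < p"
      have "poly F (int j) = a * (int j)^2 + b * int j + c"
        using poly_expand2[of F "int j"] two by (simp add: a_def b_def c_def)
      thus "[M 0 j = a * (int j)^2 + b * int j + c] (mod int p)"
        using Fcong[OF j] by (simp add: f_def cong_sym_eq)
    qed
    thus ?thesis using an by blast
  next
    case lo
    define c1 where "c1 = coeff F 1"
    have pF: "poly F z = coeff F 0 + c1 * z" for z
      using poly_expand2[of F z] lo by (simp add: c1_def coeff_eq_0)
    have s1: "1 < p" using p3 by simp
    have geq: "g 1 x = nat ((- c1) mod int p)" if x: "x < p" for x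
    proof -
      define y where "y = (x + p - 1) mod p"
      have y: "y < p" using p0 by (simp add: y_def)
      have h1: "[int y - int x = - 1] (mod int p)"
        using shift_cong[OF x s1] by (simp add: y_def cong_iff_dvd_diff)
      have "[c1 * (int y - int x) = c1 * (- 1)] (mod int p)" by (rule cong_scalar_left[OF h1])
      hence "[poly F (int y) - poly F (int x) = - c1] (mod int p)" by (simp add: pF algebra_simps)
      moreover have "[f y - f x = poly F (int y) - poly F (int x)] (mod int p)"
        by (rule cong_diff[OF cong_sym[OF Fcong[OF y]] cong_sym[OF Fcong[OF x]]])
      ultimately have "[f y - f x = - c1] (mod int p)" using cong_trans by blast
      moreover have "g 1 x = nat ((f y - f x) mod int p)" unfolding g_def y_def by simp
      ultimately show ?thesis by (simp add: cong_def)
    qed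
    have "{0, 1} \<subseteq> {j\<in>{..<p}. g 1 j = g 1 0}" using s1 geq by auto
    hence "card {0::nat, 1} \<le> card {j\<in>{..<p}. g 1 j = g 1 0}" by (intro card_mono) auto
    moreover have "card {j\<in>{..<p}. g 1 j = g 1 0} = 1" using fib[of 1] s1 gl by auto
    ultimately have False by simp
    thus ?thesis ..
  qed
qed

lemma small_not_dvd:
  fixes u v p :: nat
  assumes "u < p" "v < p" "u \<noteq> v"
  shows "\<not> int p dvd (int u - int v)"
proof
  assume "int p dvd (int u - int v)"
  then obtain q where q: "int u - int v = int p * q" by (auto elim: dvdE)
  have h1: "\<bar>int u - int v\<bar> < int p" using assms by auto
  hence "int p * \<bar>q\<bar> < int p * 1" using q by (simp add: abs_mult)
  hence "\<bar>q\<bar> < 1" using assms by (simp add: mult_less_cancel_left)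
  hence "q = 0" by simp
  thus False using q assms by simp
qed

lemma backward:
  fixes p :: nat and M :: "nat \<Rightarrow> nat \<Rightarrow> int"
  assumes pr: "prime p" and p3: "p \<ge> 3" and circ: "circulant_mod p M"
    and a0: "\<not> [a = 0] (mod int p)" and q: "\<forall>j<p. [M 0 j = a * (int j)^2 + b * int j + c] (mod int p)"
  shows "complex_hadamard p (\<lambda>i j. root_pow p (M i j))"
proof -
  have p0: "p > 0" using p3 by simp
  have pi: "prime (int p)" using pr by simp
  have mc: "[M i j = a * (int j - int i)^2 + b * (int j - int i) + c] (mod int p)" if i: "i < p" and j: "j < p" for i j
  proof -
    define y where "y = (j + p - i) mod p"
    have y: "y < p" using p0 by (simp add: y_def)
    have h1: "int p dvd ((int y - int j) - (- int i))" using shift_cong[OF j i] by (simp add: y_def)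
    have h2: "[int y = int j - int i] (mod int p)"
      using h1 by (simp add: cong_iff_dvd_diff algebra_simps)
    have "[M i j = M 0 y] (mod int p)" using circ_shift[OF p0 circ i j] by (simp add: y_def)
    also have "[M 0 y = a * (int y)^2 + b * int y + c] (mod int p)" using q y by blast
    also have "[a * (int y)^2 + b * int y + c = a * (int j - int i)^2 + b * (int j - int i) + c] (mod int p)"
      by (intro cong_add cong_scalar_left cong_pow cong_refl h2)
    finally show ?thesis .
  qed
  show ?thesis unfolding complex_hadamard_def
  proof (intro conjI allI impI)
    fix i j assume "i < p" "j < p"
    show "norm (root_pow p (M i j)) = 1" by (simp add: root_pow_def)
  next
    fix i k assume i: "i < p" and k: "k < p" and ik: "i \<noteq> k"
    define \<delta> where "\<delta> = int k - int i"
    define \<alpha> where "\<alpha> = 2 * a * \<delta>"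
    define \<beta> where "\<beta> = \<delta> * (b - a * (int i + int k))"
    define z where "z = root_pow p \<alpha>"
    have te: "root_pow p (M i j) * cnj (root_pow p (M k j)) = root_pow p \<beta> * z ^ j" if j: "j < p" for j
    proof -
      have "root_pow p (M i j) * cnj (root_pow p (M k j)) = root_pow p (M i j - M k j)" by (rule root_pow_cnj)
      also have "\<dots> = root_pow p (\<alpha> * int j + \<beta>)"
      proof (rule root_pow_cong[OF p0])
        have "[M i j - M k j = (a * (int j - int i)^2 + b * (int j - int i) + c) - (a * (int j - int k)^2 + b * (int j - int k) + c)] (mod int p)"
          by (rule cong_diff[OF mc[OF i j] mc[OF k j]])
        moreover have "(a * (int j - int i)^2 + b * (int j - int i) + c) - (a * (int j - int k)^2 + b * (int j - int k) + c) = \<alpha> * int j + \<beta>"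
          by (simp add: \<alpha>_def \<beta>_def \<delta>_def power2_eq_square algebra_simps)
        ultimately show "[M i j - M k j = \<alpha> * int j + \<beta>] (mod int p)" by simp
      qed
      also have "\<dots> = root_pow p \<beta> * z ^ j"
      proof -
        have e: "2 * pi * real_of_int (\<alpha> * int j + \<beta>) / real p =
            2 * pi * real_of_int \<beta> / real p + real j * (2 * pi * real_of_int \<alpha> / real p)"
          using p0 by (simp add: field_simps)
        have "root_pow p (\<alpha> * int j + \<beta>) = cis (2 * pi * real_of_int \<beta> / real p + real j * (2 * pi * real_of_int \<alpha> / real p))"
          by (simp only: root_pow_def e)
        also have "\<dots> = root_pow p \<beta> * z ^ j"
          by (simp only: cis_mult[symmetric] DeMoivre root_pow_def z_def)
        finally show ?thesis .
      qed
      finally show ?thesis .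
    qed
    have zp: "z ^ p = 1"
    proof -
      have "z ^ p = cis (real p * (2 * pi * real_of_int \<alpha> / real p))" by (simp only: z_def root_pow_def DeMoivre)
      also have "real p * (2 * pi * real_of_int \<alpha> / real p) = 2 * pi * real_of_int \<alpha>" using p0 by simp
      also have "cis (2 * pi * real_of_int \<alpha>) = 1" by (rule cis_multiple_2pi) simp
      finally show ?thesis .
    qed
    have nd: "\<not> int p dvd \<alpha>"
    proof
      assume h: "int p dvd \<alpha>"
      have n2: "\<not> int p dvd 2"
      proof
        assume "int p dvd 2" hence "int p \<le> 2" by (rule zdvd_imp_le) simp
        thus False using p3 by simp
      qed
      have na: "\<not> int p dvd a" using a0 by (simp add: cong_0_iff)
      have nd: "\<not> int p dvd \<delta>" unfolding \<delta>_def using small_not_dvd[OF k i] ik by auto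
      have "int p dvd 2 \<or> int p dvd a \<or> int p dvd \<delta>" using h pi unfolding \<alpha>_def by (simp add: prime_dvd_mult_iff)
      thus False using n2 na nd by blast
    qed
    have z1: "z \<noteq> 1"
    proof -
      have "z = omega p ^ nat (\<alpha> mod int p)" by (simp add: z_def root_pow_omega[OF p0])
      moreover have "\<alpha> mod int p \<noteq> 0" using nd by (simp add: dvd_eq_mod_eq_0)
      hence "0 < nat (\<alpha> mod int p)" using p0 by (simp add: order_le_neq_trans)
      moreover have "nat (\<alpha> mod int p) < p" by (rule nat_mod_lt[OF p0])
      ultimately show ?thesis using omega_neq1[OF p0] by simp
    qed
    have "(\<Sum>j<p. root_pow p (M i j) * cnj (root_pow p (M k j))) = (\<Sum>j<p. root_pow p \<beta> * z ^ j)"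
      by (rule sum.cong[OF refl]) (simp add: te)
    also have "\<dots> = root_pow p \<beta> * (\<Sum>j<p. z ^ j)" by (simp add: sum_distrib_left)
    also have "(\<Sum>j<p. z ^ j) = (z ^ p - 1) / (z - 1)" using z1 by (rule geometric_sum)
    also have "\<dots> = 0" using zp by simp
    finally show "(\<Sum>j<p. root_pow p (M i j) * cnj (root_pow p (M k j))) = 0" by simp
  qed
qed

theorem theorem5p1:
  fixes p :: nat and M :: "nat \<Rightarrow> nat \<Rightarrow> int"
  assumes "prime p" and "p \<ge> 3" and "circulant_mod p M"
  shows "complex_hadamard p (\<lambda>i j. root_pow p (M i j)) \<longleftrightarrow>
    (\<exists>a b c :: int. \<not> [a = 0] (mod int p) \<and>
       (\<forall>j<p. [M 0 j = a * (int j)^2 + b * int j + c] (mod int p)))"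
proof
  assume "complex_hadamard p (\<lambda>i j. root_pow p (M i j))"
  thus "\<exists>a b c :: int. \<not> [a = 0] (mod int p) \<and> (\<forall>j<p. [M 0 j = a * (int j)^2 + b * int j + c] (mod int p))"
    by (rule forward[OF assms])
next
  assume "\<exists>a b c :: int. \<not> [a = 0] (mod int p) \<and> (\<forall>j<p. [M 0 j = a * (int j)^2 + b * int j + c] (mod int p))"
  then obtain a b c :: int where "\<not> [a = 0] (mod int p)" "\<forall>j<p. [M 0 j = a * (int j)^2 + b * int j + c] (mod int p)"
    by blast
  thus "complex_hadamard p (\<lambda>i j. root_pow p (M i j))" by (intro backward[OF assms])
qed


end
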